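(* Let $G$ be the cdf of a continuous real random variable. For $(\lambda_1,\lambda_2)\in\mathbb{R}^2$ define $$F_{R18a}(x)=(1+\lambda_1)G(x)+(\lambda_2-\lambda_1)G^2(x)-\lambda_2G^3(x),\qquad F_G(x)=\lambda_1 G(x)+(\lambda_2-\lambda_1)G^2(x)+(1-\lambda_2)G^3(x).$$ Let $\mathscr{S}_{R18a}=\{(\lambda_1,\lambda_2): -1\le\lambda_1\le1,\ -1\le\lambda_2\le1,\ -2\le\lambda_1+\lambda_2\le1\}$, $\mathscr{S}_{MR18a}=\{(\lambda_1,\lambda_2): -1\le\lambda_1\le2,\ -1\le\lambda_2\le2,\ -2\le\lambda_1+\lambda_2\le1\}$ and $\mathscr{S}_{MG}=\{(\lambda_1,\lambda_2):0\le\lambda_1\le3,\ 0\le\lambda_2\le3,\ 0\le\lambda_1+\lambda_2\le3\}$. Then: (i) For every $(\lambda_1,\lambda_2)\in\mathscr{S}_{R18a}$, $F_{R18a}$ is a cdf. (ii) For every $(\lambda_1,\lambda_2)\in\mathscr{S}_{MR18a}$, $F_{R18a}$ is a cdf. (iii) For every $(\lambda_1,\lambda_2)\in\mathscr{S}_{MR18a}$, $(\lambda_1+1,\lambda_2+1)\in\mathscr{S}_{MG}$ and $F_{R18a}$ with parameters $(\lambda_1,\lambda_2)$ coincides with $F_G$ with parameters $(\lambda_1+1,\lambda_2+1)$. (iv) For every $(\lambda_1,\lambda_2)\in\mathscr{S}_{MG}$, $(\lambda_1-1,\lambda_2-1)\in\mathscr{S}_{MR18a}$ and $F_G$ with parameters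 $(\lambda_1,\lambda_2)$ coincides with $F_{R18a}$ with parameters $(\lambda_1-1,\lambda_2-1)$.
   Context: A cdf is a nondecreasing, right-continuous function $F:\mathbb{R}\to[0,1]$ with limits $0$ at $-\infty$ and $1$ at $+\infty$. $G^k(x)=(G(x))^k$. *)

theory Defs
  imports "HOL-Analysis.Analysis"
begin

definition is_cdf :: "(real \<Rightarrow> real) \<Rightarrow> bool" where
  "is_cdf F \<longleftrightarrow> (\<forall>x. 0 \<le> F x \<and> F x \<le> 1) \<and> mono F \<and>
     (\<forall>x. continuous (at_right x) F) \<and> (F \<longlongrightarrow> 0) at_bot \<and> (F \<longlongrightarrow> 1) at_top"

definition F_R18a :: "real \<Rightarrow> real \<Rightarrow> (real \<Rightarrow> real) \<Rightarrow> real \<Rightarrow> real" where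
  "F_R18a l1 l2 G x = (1 + l1) * G x + (l2 - l1) * (G x)^2 - l2 * (G x)^3"

definition F_G :: "real \<Rightarrow> real \<Rightarrow> (real \<Rightarrow> real) \<Rightarrow> real \<Rightarrow> real" where
  "F_G l1 l2 G x = l1 * G x + (l2 - l1) * (G x)^2 + (1 - l2) * (G x)^3"

definition S_R18a :: "(real \<times> real) set" where
  "S_R18a = {(l1, l2). -1 \<le> l1 \<and> l1 \<le> 1 \<and> -1 \<le> l2 \<and> l2 \<le> 1 \<and> -2 \<le> l1 + l2 \<and> l1 + l2 \<le> 1}"

definition S_MR18a :: "(real \<times> real) set" where
  "S_MR18a = {(l1, l2). -1 \<le> l1 \<and> l1 \<le> 2 \<and> -1 \<le> l2 \<and> l2 \<le> 2 \<and> -2 \<le> l1 + l2 \<and> l1 + l2 \<le> 1}"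

definition S_MG :: "(real \<times> real) set" where
  "S_MG = {(l1, l2). 0 \<le> l1 \<and> l1 \<le> 3 \<and> 0 \<le> l2 \<and> l2 \<le> 3 \<and> 0 \<le> l1 + l2 \<and> l1 + l2 \<le> 3}"

end

theory Submission
  imports Defs
begin

lemma bracket_nonneg:
  fixes a b x y :: real
  assumes "(a,b) \<in> S_MR18a" "0 \<le> x" "x \<le> 1" "0 \<le> y" "y \<le> 1"
  shows "0 \<le> (1 + a)  +  (b-a)*(y + x) - b*(y ^ 2 + y*x + x ^ 2)"
proof -
  define al where "al = (a + 1)/3"
  define be where "be = (b + 1)/3"
  have h: "0 \<le> al" "0 \<le> be" "al  +  be \<le> 1" using assms(1)
    by (auto simp: S_MR18a_def al_def be_def field_simps)
  have q0: "0 \<le> y ^ 2 + y*x + x ^ 2" using assms by (simp add: add_nonneg_nonneg)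
  have e1: "3 - 3*(y + x)  +  (y ^ 2 + y*x + x ^ 2) = 3*(1-(y+x)/2)^2 + (y-x)^2/4"
    by (simp add: power2_eq_square field_simps)
  have q1: "0 \<le> 3 - 3*(y + x)  +  (y ^ 2 + y*x + x ^ 2)" unfolding e1 by simp
  have r1: "y*y \<le> y*1" by (rule mult_left_mono) (use assms in auto)
  have r2: "x*x \<le> x*1" by (rule mult_left_mono) (use assms in auto)
  have r3: "y*x \<le> y*1" by (rule mult_left_mono) (use assms in auto)
  have r4: "y*x \<le> 1*x" by (rule mult_right_mono) (use assms in auto)
  have "y ^ 2 \<le> y" "x ^ 2 \<le> x" "y*x \<le> (y + x)/2"
    using r1 r2 r3 r4 by (simp_all add: power2_eq_square)
  hence q2: "0 \<le> 3*(y + x) - 2*(y ^ 2 + y*x + x ^ 2)" by (simp add: algebra_simps)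
  have a: "a = 3*al - 1" and b: "b = 3*be - 1" by (simp_all add: al_def be_def field_simps)
  have "(1 + a)  +  (b-a)*(y + x) - b*(y ^ 2 + y*x + x ^ 2)
     = (1-al-be)*(y ^ 2 + y*x + x ^ 2)  +  al*(3 - 3*(y + x)  +  (y ^ 2 + y*x + x ^ 2))  +  be*(3*(y + x) - 2*(y ^ 2 + y*x + x ^ 2))"
    unfolding a b by (simp add: algebra_simps power2_eq_square)
  also have "\<dots> \<ge> 0" proof -
    have "0 \<le> 1-al-be" using h by linarith
    thus ?thesis using h q0 q1 q2 by (metis add_nonneg_nonneg mult_nonneg_nonneg)
  qed
  finally show ?thesis .
qed

lemma p_mono:
  fixes a b x y :: real
  assumes "(a,b) \<in> S_MR18a" "0 \<le> x" "x \<le> y" "y \<le> 1"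
  shows "(1 + a)*x  +  (b-a)*x ^ 2 - b*x ^ 3 \<le> (1 + a)*y  +  (b-a)*y ^ 2 - b*y ^ 3"
proof -
  have "(1 + a)*y  +  (b-a)*y ^ 2 - b*y ^ 3 - ((1 + a)*x  +  (b-a)*x ^ 2 - b*x ^ 3)
      = (y-x)*((1 + a)  +  (b-a)*(y + x) - b*(y ^ 2 + y*x + x ^ 2))"
    by (simp add: algebra_simps power2_eq_square power3_eq_cube)
  also have "\<dots> \<ge> 0" using bracket_nonneg[OF assms(1), of x y] assms by simp
  finally show ?thesis by simp
qed

lemma cdf_R18a:
  fixes G :: "real \<Rightarrow> real"
  assumes cdf: "is_cdf G" and "continuous_on UNIV G" and ab: "(a,b) \<in> S_MR18a"
  shows "is_cdf (F_R18a a b G)"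
proof -
  have G01: "0 \<le> G x" "G x \<le> 1" for x using cdf by (auto simp: is_cdf_def)
  have Gm: "mono G" using cdf by (simp add: is_cdf_def)
  have bnd: "0 \<le> F_R18a a b G x \<and> F_R18a a b G x \<le> 1" for x
    using p_mono[OF ab, of 0 "G x"] p_mono[OF ab, of "G x" 1] G01[of x]
    by (simp add: F_R18a_def)
  have mo: "mono (F_R18a a b G)"
    unfolding mono_def F_R18a_def
    using p_mono[OF ab] G01 Gm by (metis monoD)
  have cr: "continuous (at_right x) (F_R18a a b G)" for x
  proof -
    have "continuous (at_right x) G" using cdf by (simp add: is_cdf_def)
    thus ?thesis unfolding F_R18a_def by (intro continuous_intros)
  qed
  have l0: "(F_R18a a b G \<longlongrightarrow> 0) at_bot"
  proof -
    have "(G \<longlongrightarrow> 0) at_bot" using cdf by (simp add: is_cdf_def)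
    hence "((\<lambda>x. (1  +  a) * G x  +  (b - a) * (G x) ^ 2 - b * (G x) ^ 3) \<longlongrightarrow>
       (1  +  a) * 0  +  (b - a) * 0 ^ 2 - b * 0 ^ 3) at_bot" by (intro tendsto_intros)
    thus ?thesis by (simp add: F_R18a_def[abs_def])
  qed
  have l1: "(F_R18a a b G \<longlongrightarrow> 1) at_top"
  proof -
    have "(G \<longlongrightarrow> 1) at_top" using cdf by (simp add: is_cdf_def)
    hence "((\<lambda>x. (1  +  a) * G x  +  (b - a) * (G x) ^ 2 - b * (G x) ^ 3) \<longlongrightarrow>
       (1  +  a) * 1  +  (b - a) * 1 ^ 2 - b * 1 ^ 3) at_top" by (intro tendsto_intros)
    thus ?thesis by (simp add: F_R18a_def[abs_def])
  qed
  show ?thesis unfolding is_cdf_def using bnd mo cr l0 l1 by blast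
qed

theorem proposition3:
  fixes G :: "real \<Rightarrow> real"
  assumes "is_cdf G" and "continuous_on UNIV G"
  shows "(\<forall>l1 l2. (l1, l2) \<in> S_R18a \<longrightarrow> is_cdf (F_R18a l1 l2 G))
    \<and> (\<forall>l1 l2. (l1, l2) \<in> S_MR18a \<longrightarrow> is_cdf (F_R18a l1 l2 G))
    \<and> (\<forall>l1 l2. (l1, l2) \<in> S_MR18a \<longrightarrow>
          (l1  +  1, l2  +  1) \<in> S_MG \<and> F_R18a l1 l2 G = F_G (l1  +  1) (l2  +  1) G)
    \<and> (\<forall>l1 l2. (l1, l2) \<in> S_MG \<longrightarrow>
          (l1 - 1, l2 - 1) \<in> S_MR18a \<and> F_G l1 l2 G = F_R18a (l1 - 1) (l2 - 1) G)"
proof (intro conjI allI impI)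
  fix l1 l2 assume "(l1, l2) \<in> S_R18a"
  hence "(l1, l2) \<in> S_MR18a" by (auto simp: S_R18a_def S_MR18a_def)
  thus "is_cdf (F_R18a l1 l2 G)" using cdf_R18a assms by blast
next
  fix l1 l2 assume "(l1, l2) \<in> S_MR18a"
  thus "is_cdf (F_R18a l1 l2 G)" using cdf_R18a assms by blast
next
  fix l1 l2 assume "(l1, l2) \<in> S_MR18a"
  thus "(l1  +  1, l2  +  1) \<in> S_MG" by (auto simp: S_MG_def S_MR18a_def)
next
  fix l1 l2 :: real
  show "F_R18a l1 l2 G = F_G (l1  +  1) (l2  +  1) G"
    by (rule ext) (simp add: F_R18a_def F_G_def algebra_simps)
next
  fix l1 l2 assume "(l1, l2) \<in> S_MG"
  thus "(l1 - 1, l2 - 1) \<in> S_MR18a" by (auto simp: S_MG_def S_MR18a_def)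
next
  fix l1 l2 :: real
  show "F_G l1 l2 G = F_R18a (l1 - 1) (l2 - 1) G"
    by (rule ext) (simp add: F_R18a_def F_G_def algebra_simps)
qed

end
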